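(* Let $M\in\mathbb R^{n\times n}$ be sufficient, $Q\in\mathbb R^{n\times d}$, $q\in\mathbb R^n$ and $S=\{q+Q\theta:\theta\in\mathbb R^d\}$. Then $S_f=S\cap K(M)$ is a convex polyhedron.
   Context: The complementary range $K(M)$ is the set of $q'\in\mathbb R^n$ for which there exist $w,z\in\mathbb R^n$ with $w-Mz=q'$, $w,z\ge0$, $w^Tz=0$. $M$ is column sufficient if $[z_i(Mz)_i\le 0\ \forall i]\Rightarrow[z_i(Mz)_i=0\ \forall i]$; row sufficient if $M^T$ is column sufficient; sufficient if both. *)

theory Defs
  imports "HOL-Analysis.Analysis"
begin

definition compl_range :: "real^'n^'n \<Rightarrow> (real^'n) set" where
  "compl_range M = {q'. \<exists>w z. w - M *v z = q' \<and> (\<forall>i. w $ i \<ge> 0) \<and> (\<forall>i. z $ i \<ge> 0)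
                          \<and> w \<bullet> z = 0}"

definition column_sufficient :: "real^'n^'n \<Rightarrow> bool" where
  "column_sufficient M \<longleftrightarrow>
     (\<forall>z. (\<forall>i. z $ i * (M *v z) $ i \<le> 0) \<longrightarrow> (\<forall>i. z $ i * (M *v z) $ i = 0))"

definition row_sufficient :: "real^'n^'n \<Rightarrow> bool" where
  "row_sufficient M \<longleftrightarrow> column_sufficient (transpose M)"

definition sufficient :: "real^'n^'n \<Rightarrow> bool" where
  "sufficient M \<longleftrightarrow> column_sufficient M \<and> row_sufficient M"

end

theory Submission
  imports Defs
begin

definition feasP :: "real^'n^'n \<Rightarrow> real^'n \<Rightarrow> (real^'n) set" where
  "feasP M q = {z. \<forall>i. 0 \<le> z$i \<and> 0 \<le> (q + M *v z)$i}"

definition fq :: "real^'n^'n \<Rightarrow> real^'n \<Rightarrow> real^'n \<Rightarrow> real" where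
  "fq M q z = z \<bullet> (q + M *v z)"

lemma inner_Mv: "x \<bullet> (M *v d) = (transpose M *v x) \<bullet> (d::real^'n)"
  by (metis dot_lmul_matrix transpose_transpose vector_transpose_matrix)

lemma f_expand:
  "fq M q (x + t *\<^sub>R d) = fq M q x + t * ((q + M *v x + transpose M *v x) \<bullet> d) + t^2 * (d \<bullet> (M *v d))"
  unfolding fq_def
  by (simp add: matrix_vector_right_distrib matrix_vector_mult_scaleR inner_add_left inner_add_right
       inner_Mv power2_eq_square algebra_simps inner_commute)

lemma f_nonneg: "z \<in> feasP M q \<Longrightarrow> 0 \<le> fq M q z"
  unfolding fq_def feasP_def inner_vec_def by (auto intro!: sum_nonneg)

lemma cont_f: "continuous_on S (fq M q)"
  unfolding fq_def
  by (intro continuous_intros linear_continuous_on linear_linear[THEN iffD1] matrix_vector_mul_linear)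

lemma closed_feasP: fixes M :: "real^'n^'n" shows "closed (feasP M q)"
proof -
  have "feasP M q = (\<Inter>i. {z. 0 \<le> z$i} \<inter> {z. 0 \<le> (q + M *v z)$i})"
    unfolding feasP_def by auto
  moreover have "closed {z::real^'n. 0 \<le> (q + M *v z)$i}" for i
    by (intro closed_Collect_le continuous_intros linear_continuous_on linear_linear[THEN iffD1] matrix_vector_mul_linear)
  moreover have "closed {z::real^'n. 0 \<le> z$i}" for i
    by (intro closed_Collect_le continuous_intros)
  ultimately show ?thesis by (metis (no_types, lifting) closed_INT closed_Int)
qed


lemma ev_pos: "eventually (\<lambda>t::real. 0 < t) (at_right 0)"
  by (simp add: eventually_at_filter)

lemma ev_nonneg:
  assumes "0 < a \<or> (a = 0 \<and> 0 \<le> c)"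
  shows "eventually (\<lambda>t::real. 0 \<le> a + t * c) (at_right 0)"
proof (cases "a = 0")
  case True
  then show ?thesis using assms ev_pos by (auto elim: eventually_mono)
next
  case False
  then have "a > 0" using assms by auto
  have "((\<lambda>t::real. a + t * c) \<longlongrightarrow> a + 0 * c) (at_right 0)"
    by (intro tendsto_intros)
  then have "eventually (\<lambda>t. a + t * c > 0) (at_right 0)"
    using \<open>a > 0\<close> by (auto dest: order_tendstoD)
  then show ?thesis by (auto elim: eventually_mono)
qed

lemma kkt_local:
  fixes M :: "real^'n^'n"
  assumes rs: "row_sufficient M" and xP: "x \<in> feasP M q" and nx: "norm x < R"
    and min: "\<forall>y\<in>feasP M q. norm y \<le> R \<longrightarrow> fq M q x \<le> fq M q y"
  shows "\<forall>i. x$i * (q + M *v x)$i = 0"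
proof -
  define w where "w = q + M *v x"
  define g where "g = w + transpose M *v x"
  have x0: "0 \<le> x$i" and w0: "0 \<le> w$i" for i
    using xP unfolding feasP_def w_def by auto
  have step1: "0 \<le> g \<bullet> d" if d1: "\<forall>i. x$i = 0 \<longrightarrow> 0 \<le> d$i"
      and d2: "\<forall>i. w$i = 0 \<longrightarrow> 0 \<le> (M *v d)$i" for d
  proof (rule ccontr)
    assume neg: "\<not> 0 \<le> g \<bullet> d"
    define c where "c = d \<bullet> (M *v d)"
    have e1: "eventually (\<lambda>t. \<forall>i. 0 \<le> x$i + t * d$i) (at_right 0)"
      apply (rule eventually_all_finite)
      apply (rule ev_nonneg)
      using x0 d1 by (metis order_less_le)
    have e2: "eventually (\<lambda>t. \<forall>i. 0 \<le> w$i + t * (M *v d)$i) (at_right 0)"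
      apply (rule eventually_all_finite)
      apply (rule ev_nonneg)
      using w0 d2 by (metis order_less_le)
    have "((\<lambda>t::real. norm (x + t *\<^sub>R d)) \<longlongrightarrow> norm (x + 0 *\<^sub>R d)) (at_right 0)"
      by (intro tendsto_intros)
    then have e3: "eventually (\<lambda>t. norm (x + t *\<^sub>R d) < R) (at_right 0)"
      using nx by (auto dest: order_tendstoD)
    have "((\<lambda>t::real. g \<bullet> d + t * c) \<longlongrightarrow> g \<bullet> d + 0 * c) (at_right 0)"
      by (intro tendsto_intros)
    then have "eventually (\<lambda>t. g \<bullet> d + t * c < 0) (at_right 0)"
      using order_tendstoD(2)[of _ "g \<bullet> d" _ 0] neg by simp
    then have e4: "eventually (\<lambda>t. t * (g \<bullet> d) + t^2 * c < 0) (at_right 0)"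
      using ev_pos
    proof eventually_elim
      case (elim t)
      have "t * (g \<bullet> d) + t^2 * c = t * (g \<bullet> d + t * c)" by (simp add: power2_eq_square algebra_simps)
      also have "\<dots> < 0" using elim by (simp add: mult_pos_neg)
      finally show ?case .
    qed
    have "eventually (\<lambda>t. (\<forall>i. 0 \<le> x$i + t * d$i) \<and> (\<forall>i. 0 \<le> w$i + t * (M *v d)$i)
        \<and> norm (x + t *\<^sub>R d) < R \<and> t * (g \<bullet> d) + t^2 * c < 0) (at_right (0::real))"
      using e1 e2 e3 e4 by eventually_elim auto
    then obtain t where t: "\<forall>i. 0 \<le> x$i + t * d$i" "\<forall>i. 0 \<le> w$i + t * (M *v d)$i"
        "norm (x + t *\<^sub>R d) < R" "t * (g \<bullet> d) + t^2 * c < 0"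
      using eventually_happens trivial_limit_at_right_real by blast
    have "x + t *\<^sub>R d \<in> feasP M q"
      using t(1,2) unfolding feasP_def w_def
      by (simp add: matrix_vector_right_distrib matrix_vector_mult_scaleR algebra_simps)
    then have "fq M q x \<le> fq M q (x + t *\<^sub>R d)" using min t(3) by auto
    also have "\<dots> = fq M q x + t * (g \<bullet> d) + t^2 * c"
      unfolding f_expand g_def w_def c_def by simp
    finally show False using t(4) by simp
  qed
  define G where "G = (\<lambda>i. axis i 1) ` {i. x$i = 0} \<union> (\<lambda>i. transpose M *v axis i (1::real)) ` {i. w$i = 0}"
  have finG: "finite G" unfolding G_def by simp
  have gC: "g \<in> convex_cone hull G"
  proof (rule ccontr)
    assume "g \<notin> convex_cone hull G"
    then obtain a b where ab: "a \<bullet> g < b" "\<forall>c\<in>convex_cone hull G. b < a \<bullet> c"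
      using separating_hyperplane_closed_point[OF convex_convex_cone_hull closed_convex_cone_hull[OF finG]]
      by blast
    have b0: "b < 0" using ab(2) convex_cone_hull_contains_0 by force
    have gen: "0 \<le> a \<bullet> c" if "c \<in> G" for c
    proof (rule ccontr)
      assume ac: "\<not> 0 \<le> a \<bullet> c"
      have "(b / (a \<bullet> c)) *\<^sub>R c \<in> convex_cone hull G"
        using convex_cone_hull_mul[OF hull_inc[OF that]] b0 ac by (simp add: divide_nonpos_neg)
      then have "b < a \<bullet> ((b / (a \<bullet> c)) *\<^sub>R c)" using ab(2) by blast
      then show False using ac by simp
    qed
    have "0 \<le> g \<bullet> a"
    proof (rule step1)
      show "\<forall>i. x$i = 0 \<longrightarrow> 0 \<le> a$i"
      proof (intro allI impI)
        fix i assume "x$i = 0"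
        then have "axis i 1 \<in> G" unfolding G_def by auto
        then show "0 \<le> a$i" using gen by (metis cart_eq_inner_axis)
      qed
      show "\<forall>i. w$i = 0 \<longrightarrow> 0 \<le> (M *v a)$i"
      proof (intro allI impI)
        fix i assume "w$i = 0"
        then have "transpose M *v axis i 1 \<in> G" unfolding G_def by auto
        then have "0 \<le> a \<bullet> (transpose M *v axis i 1)" using gen by blast
        then show "0 \<le> (M *v a)$i" by (metis inner_Mv transpose_transpose cart_eq_inner_axis)
      qed
    qed
    then show False using ab(1) b0 by (simp add: inner_commute)
  qed
  define D where "D = {v + transpose M *v u | u v. \<forall>i. 0 \<le> u$i \<and> 0 \<le> v$i
       \<and> (x$i \<noteq> 0 \<longrightarrow> v$i = 0) \<and> (w$i \<noteq> 0 \<longrightarrow> u$i = 0)}"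
  have "convex_cone D"
    unfolding convex_cone_iff
  proof (intro conjI ballI allI impI)
    show "0 \<in> D" unfolding D_def by (rule CollectI, rule exI[of _ 0], rule exI[of _ 0]) simp
    fix y z assume "y \<in> D" "z \<in> D"
    then obtain u1 v1 u2 v2 where
      "y = v1 + transpose M *v u1" "\<forall>i. 0 \<le> u1$i \<and> 0 \<le> v1$i \<and> (x$i \<noteq> 0 \<longrightarrow> v1$i = 0) \<and> (w$i \<noteq> 0 \<longrightarrow> u1$i = 0)"
      "z = v2 + transpose M *v u2" "\<forall>i. 0 \<le> u2$i \<and> 0 \<le> v2$i \<and> (x$i \<noteq> 0 \<longrightarrow> v2$i = 0) \<and> (w$i \<noteq> 0 \<longrightarrow> u2$i = 0)"
      unfolding D_def by blast
    then show "y + z \<in> D" unfolding D_def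
      by (intro CollectI exI[of _ "u1 + u2"] exI[of _ "v1 + v2"]) (simp add: matrix_vector_right_distrib)
  next
    fix y and c :: real assume "y \<in> D" "0 \<le> c"
    then obtain u1 v1 where
      "y = v1 + transpose M *v u1" "\<forall>i. 0 \<le> u1$i \<and> 0 \<le> v1$i \<and> (x$i \<noteq> 0 \<longrightarrow> v1$i = 0) \<and> (w$i \<noteq> 0 \<longrightarrow> u1$i = 0)"
      unfolding D_def by blast
    then show "c *\<^sub>R y \<in> D" unfolding D_def using \<open>0 \<le> c\<close>
      by (intro CollectI exI[of _ "c *\<^sub>R u1"] exI[of _ "c *\<^sub>R v1"]) (simp add: matrix_vector_mult_scaleR scaleR_add_right)
  qed
  moreover have "G \<subseteq> D"
  proof
    fix y assume "y \<in> G"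
    then show "y \<in> D" unfolding G_def D_def
    proof (elim UnE imageE)
      fix i assume "y = axis i 1" "i \<in> {i. x$i = 0}"
      then show "y \<in> {v + transpose M *v u | u v. \<forall>i. 0 \<le> u$i \<and> 0 \<le> v$i
       \<and> (x$i \<noteq> 0 \<longrightarrow> v$i = 0) \<and> (w$i \<noteq> 0 \<longrightarrow> u$i = 0)}"
        by (intro CollectI exI[of _ 0] exI[of _ "axis i 1"]) (auto simp: axis_def)
    next
      fix i assume "y = transpose M *v axis i 1" "i \<in> {i. w$i = 0}"
      then show "y \<in> {v + transpose M *v u | u v. \<forall>i. 0 \<le> u$i \<and> 0 \<le> v$i
       \<and> (x$i \<noteq> 0 \<longrightarrow> v$i = 0) \<and> (w$i \<noteq> 0 \<longrightarrow> u$i = 0)}"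
        by (intro CollectI exI[of _ "axis i 1"] exI[of _ 0]) (auto simp: axis_def)
    qed
  qed
  ultimately have "convex_cone hull G \<subseteq> D" by (rule hull_minimal[rotated])
  with gC obtain u v where uv: "g = v + transpose M *v u"
      "\<forall>i. 0 \<le> u$i \<and> 0 \<le> v$i \<and> (x$i \<noteq> 0 \<longrightarrow> v$i = 0) \<and> (w$i \<noteq> 0 \<longrightarrow> u$i = 0)"
    unfolding D_def by blast
  define y where "y = x - u"
  have My: "transpose M *v y = v - w"
    using uv(1) unfolding y_def g_def by (simp add: matrix_vector_mult_diff_distrib algebra_simps)
  have prod: "y$i * (transpose M *v y)$i = - (x$i * w$i) - u$i * v$i" for i
  proof -
    have "x$i * v$i = 0" "u$i * w$i = 0" using uv(2) by (metis mult_eq_0_iff)+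
    have "y$i * (transpose M *v y)$i = (x$i - u$i) * (v$i - w$i)"
      unfolding My by (simp add: y_def)
    also have "\<dots> = x$i * v$i - x$i * w$i - u$i * v$i + u$i * w$i" by (simp add: algebra_simps)
    finally show ?thesis using \<open>x$i * v$i = 0\<close> \<open>u$i * w$i = 0\<close> by simp
  qed
  have nn: "0 \<le> x$i * w$i" "0 \<le> u$i * v$i" for i using x0 w0 uv(2) by auto
  have "\<forall>i. y$i * (transpose M *v y)$i \<le> 0" proof
    fix i show "y$i * (transpose M *v y)$i \<le> 0" unfolding prod using nn[of i] by linarith
  qed
  then have "\<forall>i. y$i * (transpose M *v y)$i = 0"
    using rs unfolding row_sufficient_def column_sufficient_def by blast
  then show ?thesis
  proof (intro allI)
    fix i assume h: "\<forall>i. y$i * (transpose M *v y)$i = 0"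
    show "x$i * (q + M *v x)$i = 0" using h[rule_format, of i] nn[of i] unfolding prod w_def[symmetric] by linarith
  qed
qed


lemma ev_helper:
  fixes s k :: "nat \<Rightarrow> real"
  assumes "s \<longlonglongrightarrow> \<alpha>" "0 \<le> \<alpha>" "\<And>j. 0 \<le> s j" "\<And>j. 2 \<le> k j"
  shows "eventually (\<lambda>j. \<alpha> \<le> k j * s j) sequentially"
proof (cases "\<alpha> = 0")
  case True
  then show ?thesis using assms(3,4) by (auto intro!: always_eventually mult_nonneg_nonneg order_trans[OF _ assms(4)])
next
  case False
  then have "\<alpha>/2 < \<alpha>" using assms(2) by simp
  then have "eventually (\<lambda>j. \<alpha>/2 < s j) sequentially" using order_tendstoD(1)[OF assms(1)] by blast
  then show ?thesis
  proof eventually_elim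
    case (elim j)
    have "2 * s j \<le> k j * s j" using assms(3,4) by (intro mult_right_mono) auto
    then show ?case using elim by linarith
  qed
qed

lemma exists_local_min:
  fixes M :: "real^'n^'n"
  assumes z0: "z0 \<in> feasP M q"
  shows "\<exists>R x. x \<in> feasP M q \<and> norm x < R \<and> (\<forall>y\<in>feasP M q. norm y \<le> R \<longrightarrow> fq M q x \<le> fq M q y)"
proof (rule ccontr)
  assume H: "\<not> ?thesis"
  let ?P = "feasP M q" and ?f = "fq M q"
  have ex: "\<exists>x. x \<in> ?P \<and> norm x = real k \<and> (\<forall>y\<in>?P. norm y \<le> real k \<longrightarrow> ?f x \<le> ?f y)
      \<and> (\<forall>y\<in>?P. norm y \<le> real k \<and> ?f y \<le> ?f x \<longrightarrow> norm x \<le> norm y)"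
    if k: "norm z0 \<le> real k" for k
  proof -
    define K where "K = ?P \<inter> cball 0 (real k)"
    have cK: "compact K" unfolding K_def by (intro closed_Int_compact closed_feasP compact_cball)
    have z0K: "z0 \<in> K" using z0 k unfolding K_def by auto
    obtain x0 where x0: "x0 \<in> K" "\<forall>y\<in>K. ?f x0 \<le> ?f y"
      using continuous_attains_inf[OF cK _ cont_f] z0K by blast
    define Mn where "Mn = K \<inter> {x. ?f x \<le> ?f x0}"
    have cMn: "compact Mn" unfolding Mn_def
      by (intro compact_Int_closed cK closed_Collect_le cont_f continuous_on_const)
    obtain x1 where x1: "x1 \<in> Mn" "\<forall>y\<in>Mn. norm x1 \<le> norm y"
      using continuous_attains_inf[OF cMn _ continuous_on_norm_id] x0 unfolding Mn_def by blast
    have x1P: "x1 \<in> ?P" "norm x1 \<le> real k" using x1 unfolding Mn_def K_def by auto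
    have x1min: "\<forall>y\<in>?P. norm y \<le> real k \<longrightarrow> ?f x1 \<le> ?f y"
      using x1(1) x0 unfolding Mn_def K_def by force
    have "\<not> norm x1 < real k" using H x1P x1min by blast
    then have "norm x1 = real k" using x1P by simp
    moreover have "\<forall>y\<in>?P. norm y \<le> real k \<and> ?f y \<le> ?f x1 \<longrightarrow> norm x1 \<le> norm y"
      using x1 x0 unfolding Mn_def K_def by force
    ultimately show ?thesis using x1P x1min by blast
  qed
  define N where "N = nat \<lceil>norm z0\<rceil>"
  define kk where "kk j = real (Suc (Suc (j + N)))" for j
  have nz0: "norm z0 \<le> kk j" for j unfolding kk_def N_def by linarith
  have kk2: "2 \<le> kk j" for j unfolding kk_def by simp
  have kk1: "real j + 1 \<le> kk j" for j unfolding kk_def by simp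
  have "\<forall>j. \<exists>x. x \<in> ?P \<and> norm x = kk j \<and> (\<forall>y\<in>?P. norm y \<le> kk j \<longrightarrow> ?f x \<le> ?f y)
      \<and> (\<forall>y\<in>?P. norm y \<le> kk j \<and> ?f y \<le> ?f x \<longrightarrow> norm x \<le> norm y)"
  proof
    fix j
    from nz0[of j] show "\<exists>x. x \<in> ?P \<and> norm x = kk j \<and> (\<forall>y\<in>?P. norm y \<le> kk j \<longrightarrow> ?f x \<le> ?f y)
      \<and> (\<forall>y\<in>?P. norm y \<le> kk j \<and> ?f y \<le> ?f x \<longrightarrow> norm x \<le> norm y)"
      using ex unfolding kk_def by blast
  qed
  then obtain Y where Y: "\<And>j. Y j \<in> ?P" "\<And>j. norm (Y j) = kk j"
      "\<And>j. \<forall>y\<in>?P. norm y \<le> kk j \<longrightarrow> ?f (Y j) \<le> ?f y"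
      "\<And>j. \<forall>y\<in>?P. norm y \<le> kk j \<and> ?f y \<le> ?f (Y j) \<longrightarrow> norm (Y j) \<le> norm y"
    by metis
  have kkpos: "0 < kk j" for j using kk1[of j] by linarith
  define D where "D j = (1 / kk j) *\<^sub>R Y j" for j
  have YD: "Y j = kk j *\<^sub>R D j" for j unfolding D_def using kkpos[of j] by simp
  have nD: "norm (D j) = 1" for j unfolding D_def using Y(2) kkpos[of j] by simp
  have "bounded (range D)" using nD by (auto simp: bounded_iff)
  then obtain d r where r: "strict_mono r" and T1': "(D \<circ> r) \<longlonglongrightarrow> d"
    using bounded_imp_convergent_subsequence by blast
  have T1: "(\<lambda>j. D (r j)) \<longlonglongrightarrow> d" using T1' by (simp add: comp_def)
  have "(\<lambda>n. inverse (real (Suc n))) \<longlonglongrightarrow> 0" by (rule LIMSEQ_inverse_real_of_nat)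
  then have "(\<lambda>n. inverse (real (Suc (n + Suc N)))) \<longlonglongrightarrow> 0"
    by (rule LIMSEQ_ignore_initial_segment)
  then have "((\<lambda>n. inverse (real (Suc (n + Suc N)))) \<circ> r) \<longlonglongrightarrow> 0" using LIMSEQ_subseq_LIMSEQ r by blast
  then have T2: "(\<lambda>j. 1 / kk (r j)) \<longlonglongrightarrow> 0" unfolding kk_def by (simp add: comp_def divide_inverse)
  have bl: "bounded_linear (\<lambda>x::real^'n. M *v x)"
    by (simp add: linear_conv_bounded_linear)
  define E where "E j = (1 / kk j) *\<^sub>R (q + M *v Y j)" for j
  have ED: "E j = (1 / kk j) *\<^sub>R q + M *v D j" for j
    unfolding E_def D_def by (simp add: matrix_vector_mult_scaleR scaleR_add_right)
  have T3: "(\<lambda>j. E (r j)) \<longlonglongrightarrow> M *v d"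
  proof -
    have "(\<lambda>j. (1 / kk (r j)) *\<^sub>R q + M *v D (r j)) \<longlonglongrightarrow> 0 *\<^sub>R q + M *v d"
      by (intro tendsto_intros T2 bounded_linear.tendsto[OF bl] T1)
    then show ?thesis unfolding ED by simp
  qed
  have d0: "0 \<le> d$i" for i
  proof -
    have "(\<lambda>j. D (r j) $ i) \<longlonglongrightarrow> d $ i" by (intro tendsto_vec_nth T1)
    moreover have "0 \<le> D (r j) $ i" for j
      using Y(1)[of "r j"] kkpos[of "r j"] unfolding D_def feasP_def by auto
    ultimately show ?thesis by (intro LIMSEQ_le_const) auto
  qed
  have Md0: "0 \<le> (M *v d)$i" for i
  proof -
    have "(\<lambda>j. E (r j) $ i) \<longlonglongrightarrow> (M *v d) $ i" by (intro tendsto_vec_nth T3)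
    moreover have "0 \<le> E (r j) $ i" for j
      using Y(1)[of "r j"] kkpos[of "r j"] unfolding E_def feasP_def by auto
    ultimately show ?thesis by (intro LIMSEQ_le_const) auto
  qed
  have nd: "norm d = 1"
  proof -
    have "(\<lambda>j. norm (D (r j))) \<longlonglongrightarrow> norm d" by (intro tendsto_intros T1)
    then show ?thesis using nD by (simp add: LIMSEQ_const_iff)
  qed
  have dMd: "d \<bullet> (M *v d) \<le> 0"
  proof -
    have fY: "?f (Y j) * (1 / kk j)^2 = D j \<bullet> E j" for j
      unfolding fq_def D_def E_def by (simp add: power2_eq_square)
    have fle: "?f (Y j) \<le> ?f z0" for j
      using Y(3)[of j] z0 nz0[of j] by blast
    have L1: "(\<lambda>j. D (r j) \<bullet> E (r j)) \<longlonglongrightarrow> d \<bullet> (M *v d)" by (intro tendsto_intros T1 T3)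
    have L2: "(\<lambda>j. ?f z0 * (1 / kk (r j))^2) \<longlonglongrightarrow> ?f z0 * 0^2" by (intro tendsto_intros T2)
    have "D (r j) \<bullet> E (r j) \<le> ?f z0 * (1 / kk (r j))^2" for j
      unfolding fY[symmetric] using fle[of "r j"] by (intro mult_right_mono) auto
    then show ?thesis using LIMSEQ_le[OF L1 L2] by simp
  qed
  have gd: "0 \<le> (q + M *v x + transpose M *v x) \<bullet> d" if xP: "x \<in> ?P" for x
  proof (rule ccontr)
    define G where "G = (q + M *v x + transpose M *v x) \<bullet> d"
    assume "\<not> 0 \<le> (q + M *v x + transpose M *v x) \<bullet> d"
    then have G0: "G < 0" unfolding G_def by simp
    define t where "t = ?f x / (- G) + 1"
    have f0: "0 \<le> ?f x" using f_nonneg xP .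
    have t0: "0 \<le> t" unfolding t_def using f0 G0 by (simp add: divide_nonneg_pos)
    have "x + t *\<^sub>R d \<in> ?P" unfolding feasP_def
    proof (intro CollectI allI conjI)
      fix i
      have a: "0 \<le> x$i" "0 \<le> (q + M *v x)$i" using xP unfolding feasP_def by auto
      have b: "0 \<le> t * d$i" "0 \<le> t * (M *v d)$i" using t0 d0 Md0 by auto
      have c: "(q + M *v (x + t *\<^sub>R d))$i = (q + M *v x)$i + t * (M *v d)$i"
        by (simp add: matrix_vector_right_distrib matrix_vector_mult_scaleR)
      show "0 \<le> (x + t *\<^sub>R d)$i" using a b by simp
      show "0 \<le> (q + M *v (x + t *\<^sub>R d))$i" unfolding c using a b by linarith
    qed
    then have "0 \<le> ?f (x + t *\<^sub>R d)" by (rule f_nonneg)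
    also have "\<dots> = ?f x + t * G + t^2 * (d \<bullet> (M *v d))" unfolding f_expand G_def ..
    also have "\<dots> \<le> ?f x + t * G" using dMd by (simp add: mult_nonneg_nonpos)
    also have "?f x + t * G = G" unfolding t_def using G0 by (simp add: field_simps)
    finally show False using G0 by simp
  qed
  have ev1: "eventually (\<lambda>j. \<forall>i. d$i \<le> Y (r j) $ i) sequentially"
  proof (rule eventually_all_finite)
    fix i
    have "eventually (\<lambda>j. d$i \<le> kk (r j) * D (r j) $ i) sequentially"
    proof (rule ev_helper)
      show "(\<lambda>j. D (r j) $ i) \<longlonglongrightarrow> d $ i" by (intro tendsto_vec_nth T1)
      show "0 \<le> D (r j) $ i" for j
        using Y(1)[of "r j"] kkpos[of "r j"] unfolding D_def feasP_def by auto
      show "2 \<le> kk (r j)" for j by (rule kk2)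
    qed (rule d0)
    then show "eventually (\<lambda>j. d$i \<le> Y (r j) $ i) sequentially" unfolding YD by simp
  qed
  have ev2: "eventually (\<lambda>j. \<forall>i. (M *v d)$i \<le> (q + M *v Y (r j)) $ i) sequentially"
  proof (rule eventually_all_finite)
    fix i
    have "eventually (\<lambda>j. (M *v d)$i \<le> kk (r j) * E (r j) $ i) sequentially"
    proof (rule ev_helper)
      show "(\<lambda>j. E (r j) $ i) \<longlonglongrightarrow> (M *v d) $ i" by (intro tendsto_vec_nth T3)
      show "0 \<le> E (r j) $ i" for j
        using Y(1)[of "r j"] kkpos[of "r j"] unfolding E_def feasP_def by auto
      show "2 \<le> kk (r j)" for j by (rule kk2)
    qed (rule Md0)
    moreover have "kk j * E j $ i = (q + M *v Y j) $ i" for j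
      unfolding E_def using kkpos[of j] by simp
    ultimately show "eventually (\<lambda>j. (M *v d)$i \<le> (q + M *v Y (r j)) $ i) sequentially" by simp
  qed
  have "(\<lambda>j. D (r j) \<bullet> d) \<longlonglongrightarrow> d \<bullet> d" by (intro tendsto_intros T1)
  moreover have "d \<bullet> d = 1" using nd by (simp add: power2_norm_eq_inner[symmetric])
  ultimately have ev3: "eventually (\<lambda>j. 1/2 < D (r j) \<bullet> d) sequentially"
    using order_tendstoD(1)[of _ "d \<bullet> d" _ "1/2"] by simp
  have "eventually (\<lambda>j. (\<forall>i. d$i \<le> Y (r j) $ i) \<and> (\<forall>i. (M *v d)$i \<le> (q + M *v Y (r j)) $ i)
      \<and> 1/2 < D (r j) \<bullet> d) sequentially"
    using ev1 ev2 ev3 by eventually_elim blast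
  then obtain N0 where N0: "\<forall>n\<ge>N0. (\<forall>i. d$i \<le> Y (r n) $ i) \<and> (\<forall>i. (M *v d)$i \<le> (q + M *v Y (r n)) $ i)
      \<and> 1/2 < D (r n) \<bullet> d" unfolding eventually_sequentially by blast
  define j where "j = N0"
  have j: "\<forall>i. d$i \<le> Y (r j) $ i" "\<forall>i. (M *v d)$i \<le> (q + M *v Y (r j)) $ i"
      "1/2 < D (r j) \<bullet> d" using N0 unfolding j_def by auto
  define x where "x = Y (r j)"
  define k where "k = kk (r j)"
  define y where "y = x - d"
  have yP: "y \<in> ?P" using j(1,2) unfolding y_def x_def feasP_def by (simp add: matrix_vector_mult_diff_distrib add_diff_eq)
  have xd: "x \<bullet> d = k * (D (r j) \<bullet> d)" unfolding x_def k_def YD by simp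
  have "(norm y)^2 = (norm x)^2 - 2 * (x \<bullet> d) + (norm d)^2"
    unfolding y_def power2_norm_eq_inner by (simp add: inner_diff inner_commute)
  also have "\<dots> < (norm x)^2"
  proof -
    have "D (r j) \<bullet> d \<le> k * (D (r j) \<bullet> d)"
      using mult_right_mono[of 1 k "D (r j) \<bullet> d"] kk2[of "r j"] j(3) unfolding k_def by simp
    then have "1 < 2 * (k * (D (r j) \<bullet> d))" using j(3) by linarith
    then show ?thesis using xd nd by simp
  qed
  finally have ny: "norm y < norm x" by (rule power_less_imp_less_base) simp
  have "?f y = ?f (x + (-1) *\<^sub>R d)" unfolding y_def by simp
  also have "\<dots> = ?f x - (q + M *v x + transpose M *v x) \<bullet> d + d \<bullet> (M *v d)"
    unfolding f_expand by simp
  also have "\<dots> \<le> ?f x" using gd[of x] Y(1) dMd unfolding x_def by simp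
  finally have fy: "?f y \<le> ?f x" .
  have "norm y \<le> k" using ny Y(2) unfolding x_def k_def by simp
  then have "norm x \<le> norm y" using Y(4)[of "r j"] yP fy unfolding x_def k_def by blast
  then show False using ny by simp
qed


lemma compl_range_eq:
  fixes M :: "real^'n^'n"
  assumes rs: "row_sufficient M"
  shows "compl_range M = {w - M *v z | w z. (\<forall>i. 0 \<le> w$i) \<and> (\<forall>i. 0 \<le> z$i)}"
proof
  show "compl_range M \<subseteq> {w - M *v z | w z. (\<forall>i. 0 \<le> w$i) \<and> (\<forall>i. 0 \<le> z$i)}"
    unfolding compl_range_def by blast
next
  show "{w - M *v z | w z. (\<forall>i. 0 \<le> w$i) \<and> (\<forall>i. 0 \<le> z$i)} \<subseteq> compl_range M"
  proof
    fix p assume "p \<in> {w - M *v z | w z. (\<forall>i. 0 \<le> w$i) \<and> (\<forall>i. 0 \<le> z$i)}"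
    then obtain w0 z0 where wz: "p = w0 - M *v z0" "\<forall>i. 0 \<le> w0$i" "\<forall>i. 0 \<le> z0$i" by blast
    have "z0 \<in> feasP M p" using wz unfolding feasP_def by simp
    then obtain R x where x: "x \<in> feasP M p" "norm x < R" "\<forall>y\<in>feasP M p. norm y \<le> R \<longrightarrow> fq M p x \<le> fq M p y"
      using exists_local_min by blast
    have c: "\<forall>i. x$i * (p + M *v x)$i = 0" using kkt_local[OF rs x] .
    show "p \<in> compl_range M" unfolding compl_range_def
    proof (intro CollectI exI conjI)
      show "(p + M *v x) - M *v x = p" by simp
      show "\<forall>i. 0 \<le> (p + M *v x)$i" "\<forall>i. 0 \<le> x$i" using x(1) unfolding feasP_def by auto
      show "(p + M *v x) \<bullet> x = 0" unfolding inner_vec_def using c by (auto simp: mult.commute intro!: sum.neutral)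
    qed
  qed
qed

lemma sum_in_cone_hull:
  assumes "finite A" "\<forall>i\<in>A. h i \<in> convex_cone hull S"
  shows "sum h A \<in> convex_cone hull S"
  using assms by (induction A rule: finite_induct) (auto intro: convex_cone_hull_contains_0 convex_cone_hull_add)

lemma feas_cone:
  fixes M :: "real^'n^'n"
  shows "{w - M *v z | w z. (\<forall>i. 0 \<le> w$i) \<and> (\<forall>i. 0 \<le> z$i)}
       = convex_cone hull (range (\<lambda>i. axis i 1) \<union> range (\<lambda>i. - (M *v axis i 1)))"
  (is "?F = convex_cone hull ?G")
proof
  show "convex_cone hull ?G \<subseteq> ?F"
  proof (rule hull_minimal)
    show "?G \<subseteq> ?F"
    proof
      fix y assume "y \<in> ?G"
      then show "y \<in> ?F"
      proof (elim UnE rangeE)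
        fix i assume "y = axis i 1"
        then show "y \<in> ?F" by (intro CollectI exI[of _ "axis i 1"] exI[of _ 0]) (auto simp: axis_def)
      next
        fix i assume "y = - (M *v axis i 1)"
        then show "y \<in> ?F" by (intro CollectI exI[of _ 0] exI[of _ "axis i 1"]) (auto simp: axis_def)
      qed
    qed
    show "convex_cone ?F"
      unfolding convex_cone_iff
    proof (intro conjI ballI allI impI)
      show "0 \<in> ?F" by (intro CollectI exI[of _ 0]) simp
      fix y z assume "y \<in> ?F" "z \<in> ?F"
      then obtain w1 z1 w2 z2 where "y = w1 - M *v z1" "\<forall>i. 0 \<le> w1$i" "\<forall>i. 0 \<le> z1$i"
        "z = w2 - M *v z2" "\<forall>i. 0 \<le> w2$i" "\<forall>i. 0 \<le> z2$i" by blast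
      then show "y + z \<in> ?F"
        by (intro CollectI exI[of _ "w1 + w2"] exI[of _ "z1 + z2"]) (simp add: matrix_vector_right_distrib)
    next
      fix y and c :: real assume "y \<in> ?F" "0 \<le> c"
      then obtain w1 z1 where "y = w1 - M *v z1" "\<forall>i. 0 \<le> w1$i" "\<forall>i. 0 \<le> z1$i" by blast
      then show "c *\<^sub>R y \<in> ?F" using \<open>0 \<le> c\<close>
        by (intro CollectI exI[of _ "c *\<^sub>R w1"] exI[of _ "c *\<^sub>R z1"])
           (simp add: matrix_vector_mult_scaleR scaleR_diff_right)
    qed
  qed
next
  show "?F \<subseteq> convex_cone hull ?G"
  proof
    fix p assume "p \<in> ?F"
    then obtain w z where wz: "p = w - M *v z" "\<forall>i. 0 \<le> w$i" "\<forall>i. 0 \<le> z$i" by blast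
    have w: "w = (\<Sum>i\<in>UNIV. w$i *\<^sub>R axis i 1)"
      using basis_expansion[of w] by (simp add: scalar_mult_eq_scaleR)
    have z: "z = (\<Sum>i\<in>UNIV. z$i *\<^sub>R axis i 1)"
      using basis_expansion[of z] by (simp add: scalar_mult_eq_scaleR)
    have Mz: "M *v z = (\<Sum>i\<in>UNIV. z$i *\<^sub>R (M *v axis i 1))"
      by (subst z) (simp add: linear_sum[OF matrix_vector_mul_linear] matrix_vector_mult_scaleR comp_def)
    have "p = (\<Sum>i\<in>UNIV. w$i *\<^sub>R axis i 1 + z$i *\<^sub>R (- (M *v axis i 1)))"
      unfolding wz(1) Mz by (subst w) (simp add: sum_subtractf)
    also have "\<dots> \<in> convex_cone hull ?G"
      by (intro sum_in_cone_hull ballI finite convex_cone_hull_add convex_cone_hull_mul hull_inc)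
         (use wz in auto)
    finally show "p \<in> convex_cone hull ?G" .
  qed
qed

theorem mainTheorem6:
  fixes M :: "real^'n^'n" and Q :: "real^'d^'n" and q :: "real^'n"
  assumes "sufficient M"
  shows "convex ({q + Q *v \<theta> | \<theta>. True} \<inter> compl_range M)
       \<and> polyhedron ({q + Q *v \<theta> | \<theta>. True} \<inter> compl_range M)"
proof -
  have rs: "row_sufficient M" using assms unfolding sufficient_def by simp
  have aff: "affine {q + Q *v \<theta> | \<theta>. True}"
    unfolding affine_def
  proof (intro ballI allI impI)
    fix x y and u v :: real
    assume "x \<in> {q + Q *v \<theta> | \<theta>. True}" "y \<in> {q + Q *v \<theta> | \<theta>. True}" "u + v = 1"
    then obtain a b where ab: "x = q + Q *v a" "y = q + Q *v b" by blast
    have "u *\<^sub>R x + v *\<^sub>R y = (u + v) *\<^sub>R q + Q *v (u *\<^sub>R a + v *\<^sub>R b)"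
      unfolding ab by (simp add: matrix_vector_right_distrib matrix_vector_mult_scaleR algebra_simps)
    then show "u *\<^sub>R x + v *\<^sub>R y \<in> {q + Q *v \<theta> | \<theta>. True}" using \<open>u + v = 1\<close> by auto
  qed
  have "polyhedron (compl_range M)"
    unfolding compl_range_eq[OF rs] feas_cone by (intro polyhedron_convex_cone_hull) simp
  then have P: "polyhedron ({q + Q *v \<theta> | \<theta>. True} \<inter> compl_range M)"
    using polyhedron_Int[OF affine_imp_polyhedron[OF aff]] by blast
  then show ?thesis using polyhedron_imp_convex by blast
qed

end
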